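(* Assume $p(\cdot\mid z)$ is an additive energy distribution for all $z\in\mathcal{Z}^{\times}$, i.e. $p(x\mid z)=\frac{1}{\mathbb{Z}(z)}\exp(-\langle\sigma(z),E(x)\rangle)$ for some $E:\mathbb{R}^n\to\mathbb{R}^{md}$ with $\mathbb{Z}(z)=\int\exp(-\langle\sigma(z),E(x)\rangle)dx<\infty$ and support $\mathbb{R}^n$. Let $q(x,z)=q(z)q(x\mid z)$ be a test distribution with $q(x\mid z)=p(x\mid z)$ for all $z\in\mathcal{Z}^{\times}$, whose attribute support $\mathcal{Z}^{\mathsf{test}}$ satisfies $\mathcal{Z}^{\mathsf{test}}\subseteq\mathcal{Z}^{\times}$ and $\mathcal{Z}^{\mathsf{test}}\subseteq\mathsf{DAff}(\mathcal{Z}^{\mathsf{train}})$. Let $\hat E:\mathbb{R}^n\to\mathbb{R}^{md}$ and $\hat B:\mathcal{Z}^{\mathsf{train}}\to\mathbb{R}$ be such that the additive energy classifier $$\hat p(z\mid x)=\frac{\exp(-\langle\sigma(z),\hat E(x)\rangle+\log p(z)-\hat B(z))}{\sum_{z'\in\mathcal{Z}^{\mathsf{train}}}\exp(-\langle\sigma(z'),\hat E(x)\rangle+\log p(z')-\hat B(z'))},\quad z\in\mathcal{Z}^{\mathsf{train}},$$ satisfies $\hat p(z\mid x)=p(z\mid x)$ for all $z\in\mathcal{Z}^{\mathsf{train}}$ and all $x\in\mathbb{R}^n$. Define for $z\in\mathcal{Z}^{\times}$ the extrapolated bias $$B^\star(z)=\log\mathbb{E}_{x\sim p(x)}\Big[\frac{\exp(-\langle\sigma(z),\hat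 E(x)\rangle)}{\sum_{\tilde z\in\mathcal{Z}^{\mathsf{train}}}\exp(-\langle\sigma(\tilde z),\hat E(x)\rangle+\log p(\tilde z)-\hat B(\tilde z))}\Big],$$ where $p(x)$ is the training marginal of $x$. Let $\hat q$ be a probability distribution on attribute vectors with $\hat q(z)=q(z)$ for all $z\in\mathcal{Z}^{\mathsf{test}}$, and define for $z\in\mathcal{Z}^{\mathsf{test}}$ $$\hat q(z\mid x)=\frac{\exp(-\langle\sigma(z),\hat E(x)\rangle+\log\hat q(z)-B^\star(z))}{\sum_{z'\in\mathcal{Z}^{\mathsf{test}}}\exp(-\langle\sigma(z'),\hat E(x)\rangle+\log\hat q(z')-B^\star(z'))}.$$ Then $\hat q(z\mid x)=q(z\mid x)$ for all $z\in\mathcal{Z}^{\mathsf{test}}$ and all $x\in\mathbb{R}^n$.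
   Context: An attribute vector is $z=(z_1,\dots,z_m)$ with each $z_i\in\{1,\dots,d\}$; $\mathcal{Z}=\{1,\dots,d\}^m$. $\sigma(z)\in\{0,1\}^{md}$ is the concatenation of the one-hot encodings of $z_1,\dots,z_m$. For $\mathcal{A}=\{z^{(1)},\dots,z^{(k)}\}\subseteq\mathcal{Z}$, $\mathsf{DAff}(\mathcal{A})=\{z\in\mathcal{Z}:\exists\alpha\in\mathbb{R}^k,\ \sum_i\alpha_i=1,\ \sigma(z)=\sum_i\alpha_i\sigma(z^{(i)})\}$. The training distribution is $p(x,z)=p(z)p(x\mid z)$ on $\mathbb{R}^n\times\mathcal{Z}$, $\mathcal{Z}^{\mathsf{train}}$ is the support of $p(z)$, $\mathcal{Z}_i^{\mathsf{train}}$ the set of values of the $i$-th coordinate on $\mathcal{Z}^{\mathsf{train}}$, and $\mathcal{Z}^{\times}=\mathcal{Z}_1^{\mathsf{train}}\times\cdots\times\mathcal{Z}_m^{\mathsf{train}}$. $p(z\mid x)$ and $q(z\mid x)$ denote the posteriors of attributes given $x$ under $p$ and $q$. *)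

theory Defs
  imports "HOL-Analysis.Analysis"
begin

text \<open>Attribute vectors z = (z_1,...,z_m), z_i in {1..d}, are modelled as functions
  'm \<Rightarrow> 'd for finite types 'm (CARD = m) and 'd (CARD = d).
  R^{md} is real^('m \<times> 'd); sigma z is the concatenated one-hot encoding.\<close>

definition sigma :: "('m::finite \<Rightarrow> 'd::finite) \<Rightarrow> real^('m \<times> 'd)" where
  "sigma z = (\<chi> ij. if z (fst ij) = snd ij then 1 else 0)"

definition DAff :: "('m::finite \<Rightarrow> 'd::finite) set \<Rightarrow> ('m \<Rightarrow> 'd) set" where
  "DAff A = {z. \<exists>\<alpha> :: ('m \<Rightarrow> 'd) \<Rightarrow> real.
                 (\<Sum>a\<in>A. \<alpha> a) = 1 \<and> sigma z = (\<Sum>a\<in>A. \<alpha> a *\<^sub>R sigma a)}"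

definition is_pmf :: "(('m::finite \<Rightarrow> 'd::finite) \<Rightarrow> real) \<Rightarrow> bool" where
  "is_pmf f \<longleftrightarrow> (\<forall>z. 0 \<le> f z) \<and> (\<Sum>z\<in>UNIV. f z) = 1"

definition supp :: "(('m::finite \<Rightarrow> 'd::finite) \<Rightarrow> real) \<Rightarrow> ('m \<Rightarrow> 'd) set" where
  "supp f = {z. f z \<noteq> 0}"

definition Zprod :: "('m \<Rightarrow> 'd) set \<Rightarrow> ('m \<Rightarrow> 'd) set" where
  "Zprod S = {z. \<forall>i. z i \<in> (\<lambda>w. w i) ` S}"

definition Zc :: "(real^'n \<Rightarrow> real^('m::finite \<times> 'd::finite)) \<Rightarrow> ('m \<Rightarrow> 'd) \<Rightarrow> real" where
  "Zc E z = integral\<^sup>L lborel (\<lambda>x. exp (- (sigma z \<bullet> E x)))"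

definition energy_cond :: "(real^'n \<Rightarrow> real^('m::finite \<times> 'd::finite)) \<Rightarrow> ('m \<Rightarrow> 'd) \<Rightarrow> real^'n \<Rightarrow> real" where
  "energy_cond E z x = exp (- (sigma z \<bullet> E x)) / Zc E z"

definition marg :: "(('m::finite \<Rightarrow> 'd::finite) \<Rightarrow> real) \<Rightarrow> (real^'n \<Rightarrow> real^('m \<times> 'd)) \<Rightarrow> real^'n \<Rightarrow> real" where
  "marg pz E x = (\<Sum>z\<in>supp pz. pz z * energy_cond E z x)"

definition posterior :: "(('m::finite \<Rightarrow> 'd::finite) \<Rightarrow> real) \<Rightarrow> (real^'n \<Rightarrow> real^('m \<times> 'd)) \<Rightarrow> ('m \<Rightarrow> 'd) \<Rightarrow> real^'n \<Rightarrow> real" where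
  "posterior pz E z x = pz z * energy_cond E z x / marg pz E x"

definition clf_denom :: "('m::finite \<Rightarrow> 'd::finite) set \<Rightarrow> (('m \<Rightarrow> 'd) \<Rightarrow> real) \<Rightarrow> (real^'n \<Rightarrow> real^('m \<times> 'd)) \<Rightarrow> (('m \<Rightarrow> 'd) \<Rightarrow> real) \<Rightarrow> real^'n \<Rightarrow> real" where
  "clf_denom S pr Eh B x = (\<Sum>z'\<in>S. exp (- (sigma z' \<bullet> Eh x) + ln (pr z') - B z'))"

definition clf :: "('m::finite \<Rightarrow> 'd::finite) set \<Rightarrow> (('m \<Rightarrow> 'd) \<Rightarrow> real) \<Rightarrow> (real^'n \<Rightarrow> real^('m \<times> 'd)) \<Rightarrow> (('m \<Rightarrow> 'd) \<Rightarrow> real) \<Rightarrow> ('m \<Rightarrow> 'd) \<Rightarrow> real^'n \<Rightarrow> real" where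
  "clf S pr Eh B z x = exp (- (sigma z \<bullet> Eh x) + ln (pr z) - B z) / clf_denom S pr Eh B x"

definition Bstar :: "(('m::finite \<Rightarrow> 'd::finite) \<Rightarrow> real) \<Rightarrow> (real^'n \<Rightarrow> real^('m \<times> 'd)) \<Rightarrow> (real^'n \<Rightarrow> real^('m \<times> 'd)) \<Rightarrow> (('m \<Rightarrow> 'd) \<Rightarrow> real) \<Rightarrow> ('m \<Rightarrow> 'd) \<Rightarrow> real" where
  "Bstar pz E Eh Bh z = ln (integral\<^sup>L lborel (\<lambda>x. marg pz E x *
       (exp (- (sigma z \<bullet> Eh x)) / clf_denom (supp pz) pz Eh Bh x)))"

end

theory Submission
  imports Defs
begin

lemma int_pos:
  fixes f :: "'a::euclidean_space \<Rightarrow> real"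
  assumes "integrable lborel f" "\<And>x. f x > 0"
  shows "integral\<^sup>L lborel f > 0"
proof -
  have ne: "\<not> (AE x in lborel. f x = 0)"
  proof
    assume h: "AE x in lborel. f x = 0"
    have "AE x in lborel. f x = 0 \<longrightarrow> False"
      by (rule AE_I2) (metis assms(2) less_irrefl)
    then have "AE (x::'a) in lborel. False" by (rule AE_mp[OF h])
    hence "emeasure lborel (UNIV::'a set) = 0"
      by (subst (asm) AE_iff_measurable[of UNIV]) auto
    thus False by simp
  qed
  have "integral\<^sup>L lborel f \<ge> 0" using assms by (simp add: less_imp_le)
  moreover have "integral\<^sup>L lborel f \<noteq> 0"
    using integral_nonneg_eq_0_iff_AE[OF assms(1)] assms(2) ne by (simp add: less_imp_le)
  ultimately show ?thesis by simp
qed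


theorem theorem2:
  fixes pz qz qh :: "('m::finite \<Rightarrow> 'd::finite) \<Rightarrow> real"
    and E Eh :: "real^'n \<Rightarrow> real^('m \<times> 'd)"
    and Bh :: "('m \<Rightarrow> 'd) \<Rightarrow> real"
  assumes p_pmf: "is_pmf pz"
    and E_int: "\<And>z. z \<in> Zprod (supp pz) \<Longrightarrow> integrable lborel (\<lambda>x. exp (- (sigma z \<bullet> E x)))"
    and q_pmf: "is_pmf qz"
    and test_prod: "supp qz \<subseteq> Zprod (supp pz)"
    and test_daff: "supp qz \<subseteq> DAff (supp pz)"
    and clf_eq: "\<And>z x. z \<in> supp pz \<Longrightarrow> clf (supp pz) pz Eh Bh z x = posterior pz E z x"
    and qh_pmf: "is_pmf qh"
    and qh_eq: "\<And>z. z \<in> supp qz \<Longrightarrow> qh z = qz z"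
  shows "\<forall>z \<in> supp qz. \<forall>x. clf (supp qz) qh Eh (Bstar pz E Eh Bh) z x = posterior qz E z x"
  
proof -
  let ?D = "clf_denom (supp pz) pz Eh Bh"
  let ?M = "marg pz E"
  have finU: "finite (S :: ('m \<Rightarrow> 'd) set)" for S by simp
  have pmf_pos: "f z > 0" if "is_pmf f" "z \<in> supp f" for f :: "('m \<Rightarrow> 'd) \<Rightarrow> real" and z
    using that unfolding is_pmf_def supp_def by (simp add: order_le_neq_trans)
  have pmf_ne: "supp f \<noteq> {}" if "is_pmf f" for f :: "('m \<Rightarrow> 'd) \<Rightarrow> real"
  proof
    assume "supp f = {}"
    hence "\<forall>z. f z = 0" unfolding supp_def by auto
    thus False using that unfolding is_pmf_def by simp
  qed
  have Zc_pos: "Zc E z > 0" if "z \<in> Zprod (supp pz)" for z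
    unfolding Zc_def by (rule int_pos[OF E_int[OF that]]) simp
  have sub: "supp pz \<subseteq> Zprod (supp pz)" unfolding Zprod_def by auto
  have ec_pos: "energy_cond E z x > 0" if "z \<in> Zprod (supp pz)" for z x
    unfolding energy_cond_def using Zc_pos[OF that] by simp
  have D_pos: "?D x > 0" for x
    unfolding clf_denom_def by (rule sum_pos[OF finU pmf_ne[OF p_pmf]]) simp
  have M_pos: "?M x > 0" for x
    unfolding marg_def
    by (rule sum_pos[OF finU pmf_ne[OF p_pmf]]) (use pmf_pos[OF p_pmf] ec_pos sub in auto)
  define c where "c a = ln (Zc E a) - Bh a" for a
  define w where "w x = ln (?M x) - ln (?D x)" for x
  have train: "sigma a \<bullet> Eh x - sigma a \<bullet> E x = c a + w x" if a: "a \<in> supp pz" for a x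
  proof -
    have pa: "pz a > 0" using pmf_pos[OF p_pmf a] .
    have za: "Zc E a > 0" using Zc_pos a sub by auto
    have "ln (clf (supp pz) pz Eh Bh a x) = ln (posterior pz E a x)" using clf_eq[OF a] by simp
    moreover have "ln (clf (supp pz) pz Eh Bh a x) = - (sigma a \<bullet> Eh x) + ln (pz a) - Bh a - ln (?D x)"
      unfolding clf_def using D_pos[of x] by (simp add: ln_div)
    moreover have "ln (posterior pz E a x) = ln (pz a) + (- (sigma a \<bullet> E x)) - ln (Zc E a) - ln (?M x)"
      unfolding posterior_def energy_cond_def using M_pos[of x] pa za
      by (simp add: ln_div ln_mult)
    ultimately show ?thesis unfolding c_def w_def by simp
  qed
  have key: "exp (- (sigma z \<bullet> Eh x) + ln (qh z) - Bstar pz E Eh Bh z)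
      = ?D x / ?M x * (qz z * energy_cond E z x)" if z: "z \<in> supp qz" for z x
  proof -
    obtain \<alpha> where as: "(\<Sum>a\<in>supp pz. \<alpha> a) = 1" and sz: "sigma z = (\<Sum>a\<in>supp pz. \<alpha> a *\<^sub>R sigma a)"
      using test_daff z unfolding DAff_def by blast
    define C where "C = (\<Sum>a\<in>supp pz. \<alpha> a * c a)"
    have lin: "sigma z \<bullet> Eh y - sigma z \<bullet> E y = C + w y" for y
    proof -
      have "sigma z \<bullet> Eh y - sigma z \<bullet> E y = sigma z \<bullet> (Eh y - E y)" by (simp add: inner_diff_right)
      also have "\<dots> = (\<Sum>a\<in>supp pz. \<alpha> a * (sigma a \<bullet> Eh y - sigma a \<bullet> E y))"
        unfolding sz by (simp add: inner_sum_left inner_diff_right right_diff_distrib sum_subtractf)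
      also have "\<dots> = (\<Sum>a\<in>supp pz. \<alpha> a * c a + \<alpha> a * w y)"
        by (rule sum.cong) (simp_all add: train distrib_left)
      also have "\<dots> = C + w y" unfolding C_def sum.distrib using as by (simp add: sum_distrib_right[symmetric])
      finally show ?thesis .
    qed
    have ex: "exp (- (sigma z \<bullet> Eh y)) = exp (- C) * (?D y / ?M y) * exp (- (sigma z \<bullet> E y))" for y
    proof -
      have "- (sigma z \<bullet> Eh y) = - C + (ln (?D y) - ln (?M y)) + (- (sigma z \<bullet> E y))"
        using lin[of y] unfolding w_def by simp
      hence "exp (- (sigma z \<bullet> Eh y)) = exp (- C) * exp (ln (?D y) - ln (?M y)) * exp (- (sigma z \<bullet> E y))"
        by (metis exp_add)
      thus ?thesis using D_pos[of y] M_pos[of y] by (simp add: exp_diff)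
    qed
    have zp: "z \<in> Zprod (supp pz)" using test_prod z by auto
    have "Bstar pz E Eh Bh z = ln (integral\<^sup>L lborel (\<lambda>y. exp (- C) * exp (- (sigma z \<bullet> E y))))"
      unfolding Bstar_def
    proof (intro arg_cong[where f=ln] Bochner_Integration.integral_cong refl)
      fix y show "?M y * (exp (- (sigma z \<bullet> Eh y)) / ?D y) = exp (- C) * exp (- (sigma z \<bullet> E y))"
        unfolding ex using D_pos[of y] M_pos[of y] by (simp add: field_simps)
    qed
    also have "\<dots> = ln (exp (- C) * Zc E z)" unfolding Zc_def by simp
    also have "\<dots> = - C + ln (Zc E z)" using Zc_pos[OF zp] by (simp add: ln_mult)
    finally have B: "Bstar pz E Eh Bh z = - C + ln (Zc E z)" .
    have qz: "qh z = qz z" "qz z > 0" using qh_eq[OF z] pmf_pos[OF q_pmf z] by auto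
    have "exp (- (sigma z \<bullet> Eh x) + ln (qh z) - Bstar pz E Eh Bh z)
        = exp (- (sigma z \<bullet> Eh x)) * qz z * exp C / Zc E z"
      unfolding B using qz Zc_pos[OF zp] by (simp add: exp_add exp_diff exp_minus field_simps)
    also have "\<dots> = ?D x / ?M x * (qz z * energy_cond E z x)"
      unfolding ex energy_cond_def by (simp add: exp_minus field_simps)
    finally show ?thesis .
  qed
  show ?thesis
  proof (intro ballI allI)
    fix z x assume z: "z \<in> supp qz"
    have den: "clf_denom (supp qz) qh Eh (Bstar pz E Eh Bh) x = ?D x / ?M x * marg qz E x"
    proof -
      have "clf_denom (supp qz) qh Eh (Bstar pz E Eh Bh) x
          = (\<Sum>z'\<in>supp qz. ?D x / ?M x * (qz z' * energy_cond E z' x))"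
        unfolding clf_denom_def[of "supp qz"] by (rule sum.cong[OF refl]) (rule key)
      also have "\<dots> = ?D x / ?M x * marg qz E x"
        unfolding marg_def[of qz E x] by (rule sum_distrib_left[symmetric])
      finally show ?thesis .
    qed
    have mq: "marg qz E x > 0" unfolding marg_def
      by (rule sum_pos[OF finU pmf_ne[OF q_pmf]]) (use pmf_pos[OF q_pmf] ec_pos test_prod in auto)
    show "clf (supp qz) qh Eh (Bstar pz E Eh Bh) z x = posterior qz E z x"
      unfolding clf_def den key[OF z] posterior_def using D_pos[of x] M_pos[of x] mq by simp
  qed
qed

end
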